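(* Let $L$ be a finite lattice and let $\iota\colon L\to BC(L)$, $x\mapsto{\uparrow}x\cap\mathcal{M}(L)$. For every distributive lattice $\hat L$ for which there exists a join-semilattice embedding $\varphi\colon L\to\hat L$, there exists a join-semilattice embedding $\varepsilon\colon BC(L)\to\hat L$ such that $\varphi=\varepsilon\circ\iota$.
   Context: For a finite lattice $L$, $\mathcal{M}(L)$ denotes the set of meet-irreducible elements of $L$ (elements $x$ such that $x=\bigwedge X$ implies $x\in X$ for all $X\subseteq L$), ordered by the order of $L$; ${\uparrow}x=\{a\in L\mid a\ge x\}$. For an ordered set $P$, $\mathcal{F}(P)$ is the set of order filters (up-sets) of $P$. The (up-set) Birkhoff completion is $BC(L):=(\mathcal{F}(\mathcal{M}(L)),\supseteq)$, whose binary join is intersection. A join-semilattice embedding between lattices is an injective map preserving binary joins. *)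

theory Defs
  imports Main
begin

(* A finite lattice is modelled as a type of class {finite, complete_lattice};
   every (nonempty) finite lattice is complete, so this is no restriction. *)

definition meet_irreducibles :: "('a::complete_lattice) set" where
  "meet_irreducibles = {x. \<forall>X. x = Inf X \<longrightarrow> x \<in> X}"

definition BC :: "('a::complete_lattice) set set" where
  "BC = {F. F \<subseteq> meet_irreducibles \<and>
            (\<forall>a\<in>F. \<forall>b\<in>meet_irreducibles. a \<le> b \<longrightarrow> b \<in> F)}"

definition iota :: "('a::complete_lattice) \<Rightarrow> 'a set" where
  "iota x = {a. x \<le> a} \<inter> meet_irreducibles"

definition join_emb :: "('a::lattice \<Rightarrow> 'b::lattice) \<Rightarrow> bool" where
  "join_emb f \<longleftrightarrow> inj f \<and> (\<forall>x y. f (sup x y) = sup (f x) (f y))"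

(* join-semilattice embedding from BC(L) (ordered by \<supseteq>, join = \<inter>) *)
definition join_emb_BC :: "('a::complete_lattice set \<Rightarrow> 'b::lattice) \<Rightarrow> bool" where
  "join_emb_BC e \<longleftrightarrow> inj_on e BC \<and>
     (\<forall>F\<in>BC. \<forall>G\<in>BC. e (F \<inter> G) = sup (e F) (e G))"

end

theory Submission
  imports Defs
begin

lemma Sup_fin_ins2:
  fixes c d :: "'b::lattice"
  assumes "finite X"
  shows "Sup_fin (insert c (insert d X)) = sup d (Sup_fin (insert c X))"
proof -
  have "insert c (insert d X) = insert d (insert c X)" by auto
  then show ?thesis using assms by (simp add: Sup_fin.insert)
qed

lemma Sup_fin_insert_union:
  fixes c :: "'b::lattice"
  assumes "finite P" "finite Q"
  shows "Sup_fin (insert c (P \<union> Q)) = sup (Sup_fin (insert c P)) (Sup_fin (insert c Q))"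
proof -
  have "insert c (P \<union> Q) = insert c P \<union> insert c Q" by auto
  then show ?thesis using assms by (metis Sup_fin.union finite_insert insert_not_empty)
qed

lemma sel_lemma:
  fixes f :: "'x \<Rightarrow> 'b::distrib_lattice"
  assumes "finite I"
  shows "(\<forall>i\<in>I. finite (A i) \<and> A i \<noteq> {}) \<Longrightarrow>
    (\<forall>s. (\<forall>i\<in>I. s i \<in> A i) \<longrightarrow> b \<le> Sup_fin (insert c ((\<lambda>i. f (s i)) ` I))) \<Longrightarrow>
    b \<le> Sup_fin (insert c ((\<lambda>i. Inf_fin (f ` A i)) ` I))"
  using assms
proof (induction I arbitrary: c rule: finite_induct)
  case empty
  then show ?case by auto
next
  case (insert i I)
  let ?g = "\<lambda>i. Inf_fin (f ` A i)"
  let ?R = "Sup_fin (insert c (?g ` I))"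
  have fA: "finite (A i)" "A i \<noteq> {}" using insert.prems by auto
  have "Sup_fin (insert c (?g ` insert i I)) = sup (?g i) ?R"
    using insert.hyps by (metis Sup_fin_ins2 finite_imageI image_insert)
  also have "\<dots> = sup ?R (Inf_fin (f ` A i))" by (simp add: sup_commute)
  also have "\<dots> = Inf_fin {sup ?R a |a. a \<in> f ` A i}"
    using fA by (simp add: sup_Inf1_distrib)
  finally have eq: "Sup_fin (insert c (?g ` insert i I)) = Inf_fin {sup ?R a |a. a \<in> f ` A i}" .
  have "b \<le> Inf_fin {sup ?R a |a. a \<in> f ` A i}"
  proof (subst Inf_fin.bounded_iff)
    show "finite {sup ?R a |a. a \<in> f ` A i}" using fA by simp
    show "{sup ?R a |a. a \<in> f ` A i} \<noteq> {}" using fA by auto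
    show "\<forall>a\<in>{sup ?R a |a. a \<in> f ` A i}. b \<le> a"
    proof
      fix z assume "z \<in> {sup ?R a |a. a \<in> f ` A i}"
      then obtain y where y: "y \<in> A i" "z = sup ?R (f y)" by auto
      have "b \<le> Sup_fin (insert (sup c (f y)) (?g ` I))"
      proof (rule insert.IH)
        show "\<forall>i\<in>I. finite (A i) \<and> A i \<noteq> {}" using insert.prems by auto
        show "\<forall>s. (\<forall>i\<in>I. s i \<in> A i) \<longrightarrow> b \<le> Sup_fin (insert (sup c (f y)) ((\<lambda>i. f (s i)) ` I))"
        proof (intro allI impI)
          fix s assume s: "\<forall>i\<in>I. s i \<in> A i"
          let ?s = "s(i := y)"
          have "\<forall>j\<in>insert i I. ?s j \<in> A j" using s y by auto
          then have "b \<le> Sup_fin (insert c ((\<lambda>j. f (?s j)) ` insert i I))"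
            using insert.prems by blast
          also have "(\<lambda>j. f (?s j)) ` insert i I = insert (f y) ((\<lambda>j. f (s j)) ` I)"
            using insert.hyps by auto
          also have "Sup_fin (insert c (insert (f y) ((\<lambda>j. f (s j)) ` I)))
              = Sup_fin (insert (sup c (f y)) ((\<lambda>i. f (s i)) ` I))"
          proof (cases "I = {}")
            case True then show ?thesis by simp
          next
            case False
            then show ?thesis using insert.hyps
              by (simp add: Sup_fin_ins2 Sup_fin.insert ac_simps)
          qed
          finally show "b \<le> Sup_fin (insert (sup c (f y)) ((\<lambda>i. f (s i)) ` I))" .
        qed
      qed
      also have "Sup_fin (insert (sup c (f y)) (?g ` I)) = z"
      proof (cases "I = {}")
        case True then show ?thesis using y by (simp add: sup_commute)
      next
        case False
        then show ?thesis using insert.hyps y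
          by (simp add: Sup_fin.insert ac_simps)
      qed
      finally show "b \<le> z" .
    qed
  qed
  then show ?case using eq by simp
qed

lemma top_not_M: "(top::'a::complete_lattice) \<notin> meet_irreducibles"
  unfolding meet_irreducibles_def by (auto intro: exI[of _ "{}"])

lemma inf_of_M:
  fixes x :: "'a::{finite,complete_lattice}"
  shows "x = Inf {m \<in> meet_irreducibles. x \<le> m}"
proof (induction "card {z. x < z}" arbitrary: x rule: less_induct)
  case less
  show ?case
  proof (cases "x \<in> meet_irreducibles")
    case True
    then show ?thesis by (auto intro: antisym Inf_lower Inf_greatest)
  next
    case False
    then obtain X where X: "x = Inf X" "x \<notin> X" unfolding meet_irreducibles_def by auto
    have "Inf {m \<in> meet_irreducibles. x \<le> m} \<le> y" if "y \<in> X" for y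
    proof -
      have "x \<le> y" using X that by (auto intro: Inf_lower)
      then have "x < y" using X that by (metis order.not_eq_order_implies_strict)
      have "{z. y < z} \<subset> {z. x < z}" using \<open>x < y\<close> by auto
      then have "card {z. y < z} < card {z. x < z}" by (simp add: psubset_card_mono)
      then have "y = Inf {m \<in> meet_irreducibles. y \<le> m}" using less by blast
      moreover have "Inf {m \<in> meet_irreducibles. x \<le> m} \<le> Inf {m \<in> meet_irreducibles. y \<le> m}"
        using \<open>x \<le> y\<close> by (intro Inf_superset_mono) auto
      ultimately show ?thesis by simp
    qed
    then have "Inf {m \<in> meet_irreducibles. x \<le> m} \<le> x" using X by (auto intro: Inf_greatest)
    moreover have "x \<le> Inf {m \<in> meet_irreducibles. x \<le> m}" by (auto intro: Inf_greatest)
    ultimately show ?thesis by (rule antisym[rotated])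
  qed
qed

theorem mainTheorem3:
  fixes \<phi> :: "'a::{finite, complete_lattice} \<Rightarrow> 'b::distrib_lattice"
  assumes "join_emb \<phi>"
  shows "\<exists>\<epsilon> :: 'a set \<Rightarrow> 'b. join_emb_BC \<epsilon> \<and> (\<forall>x. \<phi> x = \<epsilon> (iota x))"
proof -
  let ?M = "meet_irreducibles :: 'a set"
  have injp: "inj \<phi>" and hs: "\<And>x y. \<phi> (sup x y) = sup (\<phi> x) (\<phi> y)"
    using assms unfolding join_emb_def by auto
  have mono: "\<phi> x \<le> \<phi> y" if "x \<le> y" for x y
    by (metis hs le_iff_sup that)
  define A where "A m = {y::'a. \<not> y \<le> m}" for m
  define e where "e m = Inf_fin (\<phi> ` A m)" for m
  define \<epsilon> where "\<epsilon> F = Sup_fin (insert (\<phi> bot) (e ` (?M - F)))" for F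
  have Ane: "A m \<noteq> {}" if "m \<in> ?M" for m
  proof -
    have "m \<noteq> top" using that top_not_M by metis
    then have "top \<in> A m" unfolding A_def using top_unique by auto
    then show ?thesis by auto
  qed
  have Afin: "finite (A m)" for m by simp
  have phisup: "\<phi> (Sup (insert a (s ` I))) = Sup_fin (insert (\<phi> a) ((\<lambda>i. \<phi> (s i)) ` I))"
    if "finite I" for I and s :: "'i \<Rightarrow> 'a" and a
    using that
  proof (induction I rule: finite_induct)
    case empty then show ?case by simp
  next
    case (insert i I)
    have "Sup (insert a (s ` insert i I)) = sup (s i) (Sup (insert a (s ` I)))"
      by (simp add: sup_left_commute)
    then have "\<phi> (Sup (insert a (s ` insert i I))) = sup (\<phi> (s i)) (\<phi> (Sup (insert a (s ` I))))"
      by (simp add: hs)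
    also have "\<dots> = sup (\<phi> (s i)) (Sup_fin (insert (\<phi> a) ((\<lambda>i. \<phi> (s i)) ` I)))"
      using insert.IH by simp
    also have "\<dots> = Sup_fin (insert (\<phi> a) ((\<lambda>i. \<phi> (s i)) ` insert i I))"
      using insert.hyps by (metis Sup_fin_ins2 finite_imageI image_insert)
    finally show ?case .
  qed
  have part1: "\<phi> x = \<epsilon> (iota x)" for x
  proof -
    have MI: "?M - iota x = {m \<in> ?M. \<not> x \<le> m}" unfolding iota_def by auto
    let ?I = "{m \<in> ?M. \<not> x \<le> m}"
    have "\<phi> x \<le> Sup_fin (insert (\<phi> bot) ((\<lambda>i. Inf_fin (\<phi> ` A i)) ` ?I))"
    proof (rule sel_lemma)
      show "finite ?I" by simp
      show "\<forall>i\<in>?I. finite (A i) \<and> A i \<noteq> {}" using Ane by auto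
      show "\<forall>s. (\<forall>i\<in>?I. s i \<in> A i) \<longrightarrow> \<phi> x \<le> Sup_fin (insert (\<phi> bot) ((\<lambda>i. \<phi> (s i)) ` ?I))"
      proof (intro allI impI)
        fix s assume s: "\<forall>i\<in>?I. s i \<in> A i"
        define z where "z = Sup (insert bot (s ` ?I))"
        have "x \<le> z"
        proof (rule ccontr)
          assume nx: "\<not> x \<le> z"
          have zz: "z = Inf {m \<in> ?M. z \<le> m}" by (rule inf_of_M)
          have "\<exists>m\<in>?M. z \<le> m \<and> \<not> x \<le> m"
          proof (rule ccontr)
            assume "\<not> ?thesis"
            then have "x \<le> Inf {m \<in> ?M. z \<le> m}" by (auto intro: Inf_greatest)
            then show False using nx zz by simp
          qed
          then obtain m where m: "m \<in> ?M" "z \<le> m" "\<not> x \<le> m" by blast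
          then have "s m \<le> z" unfolding z_def by (auto intro: Sup_upper)
          then have "s m \<le> m" using m by simp
          moreover have "s m \<in> A m" using s m by auto
          ultimately show False unfolding A_def by simp
        qed
        then have "\<phi> x \<le> \<phi> z" by (rule mono)
        also have "\<phi> z = Sup_fin (insert (\<phi> bot) ((\<lambda>i. \<phi> (s i)) ` ?I))"
          unfolding z_def by (rule phisup) simp
        finally show "\<phi> x \<le> Sup_fin (insert (\<phi> bot) ((\<lambda>i. \<phi> (s i)) ` ?I))" .
      qed
    qed
    then have le1: "\<phi> x \<le> \<epsilon> (iota x)" unfolding \<epsilon>_def e_def MI by (simp add: image_image)
    have le2: "\<epsilon> (iota x) \<le> \<phi> x"
      unfolding \<epsilon>_def MI
    proof (subst Sup_fin.bounded_iff)
      show "finite (insert (\<phi> bot) (e ` ?I))" by simp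
      show "insert (\<phi> bot) (e ` ?I) \<noteq> {}" by simp
      show "\<forall>a\<in>insert (\<phi> bot) (e ` ?I). a \<le> \<phi> x"
      proof
        fix a assume "a \<in> insert (\<phi> bot) (e ` ?I)"
        then show "a \<le> \<phi> x"
        proof
          assume "a = \<phi> bot" then show ?thesis using mono by simp
        next
          assume "a \<in> e ` ?I"
          then obtain m where "m \<in> ?I" "a = e m" by auto
          then have "x \<in> A m" unfolding A_def by simp
          then show ?thesis using \<open>a = e m\<close> unfolding e_def
            by (simp add: Inf_fin.coboundedI)
        qed
      qed
    qed
    show ?thesis using le1 le2 by simp
  qed
  have part2: "\<epsilon> (F \<inter> G) = sup (\<epsilon> F) (\<epsilon> G)" for F G
  proof -
    have a1: "?M - F \<inter> G = (?M - F) \<union> (?M - G)" by (rule Diff_Int)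
    have a2: "e ` (?M - F \<inter> G) = e ` (?M - F) \<union> e ` (?M - G)" unfolding a1 by (rule image_Un)
    have a3: "\<epsilon> (F \<inter> G) = Sup_fin (insert (\<phi> bot) (e ` (?M - F) \<union> e ` (?M - G)))"
      unfolding \<epsilon>_def a2 ..
    show ?thesis unfolding a3 unfolding \<epsilon>_def
      by (rule Sup_fin_insert_union) simp_all
  qed
  have key: "\<epsilon> F \<noteq> \<epsilon> G" if "F \<in> BC" "G \<in> BC" "m \<in> G" "m \<notin> F" for F G m
  proof
    assume eq: "\<epsilon> F = \<epsilon> G"
    have mM: "m \<in> ?M" using that unfolding BC_def by auto
    have "e m \<in> insert (\<phi> bot) (e ` (?M - F))" using mM that by simp
    then have "e m \<le> \<epsilon> F" unfolding \<epsilon>_def by (intro Sup_fin.coboundedI) simp_all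
    moreover have "\<epsilon> G \<le> \<phi> m"
      unfolding \<epsilon>_def
    proof (subst Sup_fin.bounded_iff)
      show "finite (insert (\<phi> bot) (e ` (?M - G)))" by simp
      show "insert (\<phi> bot) (e ` (?M - G)) \<noteq> {}" by simp
      show "\<forall>a\<in>insert (\<phi> bot) (e ` (?M - G)). a \<le> \<phi> m"
      proof
        fix a assume "a \<in> insert (\<phi> bot) (e ` (?M - G))"
        then show "a \<le> \<phi> m"
        proof
          assume "a = \<phi> bot" then show ?thesis using mono by simp
        next
          assume "a \<in> e ` (?M - G)"
          then obtain m' where m': "m' \<in> ?M - G" "a = e m'" by auto
          then have "\<not> m \<le> m'" using that unfolding BC_def by auto
          then have "m \<in> A m'" unfolding A_def by simp
          then show ?thesis using m' unfolding e_def
            by (simp add: Inf_fin.coboundedI)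
        qed
      qed
    qed
    ultimately have emle: "e m \<le> \<phi> m" using eq by simp
    define ms where "ms = Inf {y. m < y}"
    have "m \<le> ms" unfolding ms_def by (auto intro: Inf_greatest)
    moreover have "m \<noteq> ms" using mM unfolding ms_def meet_irreducibles_def by auto
    ultimately have mms: "m < ms" by simp
    have "\<phi> ms \<le> Inf_fin {sup (\<phi> m) a |a. a \<in> \<phi> ` A m}"
    proof (subst Inf_fin.bounded_iff)
      show "finite {sup (\<phi> m) a |a. a \<in> \<phi> ` A m}" by simp
      show "{sup (\<phi> m) a |a. a \<in> \<phi> ` A m} \<noteq> {}" using Ane[OF mM] by auto
      show "\<forall>a\<in>{sup (\<phi> m) a |a. a \<in> \<phi> ` A m}. \<phi> ms \<le> a"
      proof
        fix a assume "a \<in> {sup (\<phi> m) a |a. a \<in> \<phi> ` A m}"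
        then obtain y where y: "y \<in> A m" "a = sup (\<phi> m) (\<phi> y)" by auto
        have "m \<noteq> sup m y" using y(1) unfolding A_def by (simp add: le_iff_sup sup_commute)
        then have "m < sup m y" using sup_ge1[of m y] by (simp add: order_less_le)
        then have "ms \<le> sup m y" unfolding ms_def by (auto intro: Inf_lower)
        then have "\<phi> ms \<le> \<phi> (sup m y)" by (rule mono)
        then show "\<phi> ms \<le> a" using y hs by simp
      qed
    qed
    also have "\<dots> = sup (\<phi> m) (e m)" unfolding e_def
      using Ane[OF mM] by (simp add: sup_Inf1_distrib)
    also have "\<dots> = \<phi> m" using emle by (simp add: sup_absorb1)
    finally have "\<phi> ms \<le> \<phi> m" .
    moreover have "\<phi> m \<le> \<phi> ms" using mms by (simp add: mono)
    ultimately have "\<phi> ms = \<phi> m" by simp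
    then have "ms = m" using injp by (simp add: inj_eq)
    then show False using mms by simp
  qed
  have "inj_on \<epsilon> BC"
  proof (rule inj_onI)
    fix F G assume FG: "F \<in> BC" "G \<in> BC" "\<epsilon> F = \<epsilon> G"
    show "F = G"
    proof (rule ccontr)
      assume "F \<noteq> G"
      then obtain m where "(m \<in> G \<and> m \<notin> F) \<or> (m \<in> F \<and> m \<notin> G)" by blast
      then show False using key FG by metis
    qed
  qed
  then have "join_emb_BC \<epsilon>" unfolding join_emb_BC_def using part2 by auto
  then show ?thesis using part1 by blast
qed

end
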